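(* Consider the recursive network formation model with the utility function described in the context, with $\gamma=0$ and no upper bound on the number of nodes. If $$b_1-b_3\le c<b_1 \quad\text{and}\quad b_2-b_3<c_0<b_2-b_4,$$ then the resulting topology is a 2-star. That is, starting from a single node, for every $n$ the pairwise stable network reached after the $n$-th node has entered is: - for $n\le3$: a path on $n$ nodes; - for $n\ge4$: a 2-star on $n$ nodes, irrespective of the random order in which nodes are selected to move.
   Context: A 2-star on $n\ge4$ nodes consists of two adjacent "center" nodes. Every other node is a leaf adjacent to exactly one center and to nothing else. Each center has at least one leaf, and the numbers of leaves of the two centers differ by at most one. Networks are finite simple undirected graphs whose vertices (nodes) are self-interested agents. Parameters: benefits $b_1>b_2>b_3>b_4>\dots>0$, where $b_i$ is the benefit a node obtains from a node at distance $i$; a link cost $c$ per immediate neighbor; an intermediation fraction $\gamma$ with $0\le\gamma<1$; and a network entry factor $c_0$. Notation: $N$ is the set of nodes currently in the network, $d_j$ the degree of $j$, and $l(j,w)$ the graph distance. A node $x$ is essential for a pair $y,z$ (with $x\notin\{y,z\}$) if $x$ lies on every path joining $y$ and $z$. Write $E(y,z)$ for the set of nodes essential for $y,z$ and $e(y,z)=|E(y,z)|$. Only pairs joined by a path contribute to the sums below. Utility of node $j$ in network $g$: $$u_j(g)=-c_0\,d_{T(j)}\mathbf 1_{\{j=\mathrm{NE}\}}+d_j(b_1-c)+\sum_{w\in N,\ l(j,w)>1}b_{l(j,w)}-\sum_{w\in N,\ E(j,w)\ne\emptyset}\gamma\, b_{l(j,w)}+\sum_{y,z\in N,\ j\in E(y,z)}\frac{\gamma}{e(y,z)}\,2\,b_{l(y,z)}.$$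 Here $\mathbf 1_{\{j=\mathrm{NE}\}}=1$ exactly when $j$ is a newly entering node evaluating the creation of its first link. $T(j)$ is the existing node to which $j$ forms that first link, and $d_{T(j)}$ is that node's degree before the link. The network before entry gives the entering node utility $0$. Pairwise stability: $g$ is pairwise stable if (a) for every link $(i,j)\in g$, $u_i(g\setminus\{(i,j)\})\le u_i(g)$ and $u_j(g\setminus\{(i,j)\})\le u_j(g)$; and (b) for every non-link $(i,j)\notin g$, if $u_i(g\cup\{(i,j)\})>u_i(g)$ then $u_j(g\cup\{(i,j)\})<u_j(g)$. Recursive model of network formation: - The process starts with a single node. - When the current network of $n-1$ nodes is pairwise stable, a new node considers entering. Its options are to stay out or to propose a link to one existing node. The link forms iff the receiving node's utility does not decrease. No existing node can link to the newcomer before it has formed this first link. - After entry, nodes are repeatedly chosen at random to move. A chosen node plays a myopic best response among three options: create a link with a non-neighbor (the link forms only if the other node's utility does not decrease, which the proposer anticipates); delete a link with a neighbor (unilaterally); or keep the status quo. It alters a link only if this strictly increases its current utility. - This continues until the network is pairwise stable; then the next node considers entering, and so on. "The resulting topology is X" means: for every number $n$ of nodes, every pairwise stable network reached after the $n$-th node has entered is a network of topology X on $n$ nodes, irrespective of the random choices. *)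

theory Defs
  imports Complex_Main
begin

text \<open>Networks on the node set {..<n} (nodes 0,...,n-1; the k-th entering node is k-1).
  A network is a set of ordered pairs, kept symmetric and irreflexive.\<close>

type_synonym graph = "(nat \<times> nat) set"

definition link :: "nat \<Rightarrow> nat \<Rightarrow> graph" where
  "link i j = {(i, j), (j, i)}"

definition degree :: "nat \<Rightarrow> graph \<Rightarrow> nat \<Rightarrow> nat" where
  "degree n g j = card {w \<in> {..<n}. (j, w) \<in> g}"

definition is_vpath :: "graph \<Rightarrow> nat list \<Rightarrow> nat \<Rightarrow> nat \<Rightarrow> bool" where
  "is_vpath g xs y z \<longleftrightarrow> xs \<noteq> [] \<and> hd xs = y \<and> last xs = z \<and> distinct xs \<and>
     (\<forall>k. Suc k < length xs \<longrightarrow> (xs ! k, xs ! Suc k) \<in> g)"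

definition joined :: "graph \<Rightarrow> nat \<Rightarrow> nat \<Rightarrow> bool" where
  "joined g y z \<longleftrightarrow> (\<exists>xs. is_vpath g xs y z)"

definition gdist :: "graph \<Rightarrow> nat \<Rightarrow> nat \<Rightarrow> nat" where
  "gdist g y z = (LEAST k. \<exists>xs. is_vpath g xs y z \<and> length xs = Suc k)"

definition essential :: "graph \<Rightarrow> nat \<Rightarrow> nat \<Rightarrow> nat \<Rightarrow> bool" where
  "essential g x y z \<longleftrightarrow> x \<noteq> y \<and> x \<noteq> z \<and> (\<forall>xs. is_vpath g xs y z \<longrightarrow> x \<in> set xs)"

definition ess_set :: "nat \<Rightarrow> graph \<Rightarrow> nat \<Rightarrow> nat \<Rightarrow> nat set" where
  "ess_set n g y z = {x \<in> {..<n}. essential g x y z}"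

text \<open>Utility of node j in network g on nodes {..<n}, without the entry term.
  b i is the benefit at distance i (b 0 unused). Pairs {y,z} in the
  intermediation term are unordered (y < z).\<close>
definition utility :: "(nat \<Rightarrow> real) \<Rightarrow> real \<Rightarrow> real \<Rightarrow> nat \<Rightarrow> graph \<Rightarrow> nat \<Rightarrow> real" where
  "utility b c \<gamma> n g j =
     real (degree n g j) * (b 1 - c)
     + (\<Sum>w\<in>{w \<in> {..<n}. joined g j w \<and> gdist g j w > 1}. b (gdist g j w))
     - (\<Sum>w\<in>{w \<in> {..<n}. joined g j w \<and> ess_set n g j w \<noteq> {}}. \<gamma> * b (gdist g j w))
     + (\<Sum>p\<in>{(y, z). y < z \<and> z < n \<and> joined g y z \<and> j \<in> ess_set n g y z}.
          \<gamma> / real (card (ess_set n g (fst p) (snd p))) * 2 * b (gdist g (fst p) (snd p)))"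

definition entry_utility ::
  "(nat \<Rightarrow> real) \<Rightarrow> real \<Rightarrow> real \<Rightarrow> real \<Rightarrow> nat \<Rightarrow> graph \<Rightarrow> nat \<Rightarrow> real" where
  "entry_utility b c \<gamma> c0 n g T =
     - c0 * real (degree n g T) + utility b c \<gamma> (Suc n) (g \<union> link n T) n"

definition pairwise_stable :: "(nat \<Rightarrow> real) \<Rightarrow> real \<Rightarrow> real \<Rightarrow> nat \<Rightarrow> graph \<Rightarrow> bool" where
  "pairwise_stable b c \<gamma> n g \<longleftrightarrow>
     (\<forall>(i, j) \<in> g.
        utility b c \<gamma> n (g - link i j) i \<le> utility b c \<gamma> n g i \<and>
        utility b c \<gamma> n (g - link i j) j \<le> utility b c \<gamma> n g j) \<and>
     (\<forall>i<n. \<forall>j<n. i \<noteq> j \<and> (i, j) \<notin> g \<longrightarrow>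
        utility b c \<gamma> n (g \<union> link i j) i > utility b c \<gamma> n g i \<longrightarrow>
        utility b c \<gamma> n (g \<union> link i j) j < utility b c \<gamma> n g j)"

definition options :: "(nat \<Rightarrow> real) \<Rightarrow> real \<Rightarrow> real \<Rightarrow> nat \<Rightarrow> graph \<Rightarrow> nat \<Rightarrow> graph set" where
  "options b c \<gamma> n g i =
     {g} \<union> {g - link i j | j. (i, j) \<in> g} \<union>
     {g \<union> link i j | j. j < n \<and> j \<noteq> i \<and> (i, j) \<notin> g \<and>
        utility b c \<gamma> n (g \<union> link i j) j \<ge> utility b c \<gamma> n g j}"

definition br_move :: "(nat \<Rightarrow> real) \<Rightarrow> real \<Rightarrow> real \<Rightarrow> nat \<Rightarrow> graph \<Rightarrow> graph \<Rightarrow> bool" where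
  "br_move b c \<gamma> n g g' \<longleftrightarrow> (\<exists>i<n. g' \<in> options b c \<gamma> n g i \<and>
      utility b c \<gamma> n g' i > utility b c \<gamma> n g i \<and>
      (\<forall>h \<in> options b c \<gamma> n g i. utility b c \<gamma> n h i \<le> utility b c \<gamma> n g' i))"

definition accepts :: "(nat \<Rightarrow> real) \<Rightarrow> real \<Rightarrow> real \<Rightarrow> nat \<Rightarrow> graph \<Rightarrow> nat \<Rightarrow> bool" where
  "accepts b c \<gamma> n g T \<longleftrightarrow> T < n \<and>
     utility b c \<gamma> (Suc n) (g \<union> link n T) T \<ge> utility b c \<gamma> n g T"

text \<open>The newcomer n enters by linking to T: T accepts, this is a best choice among the
  accepting targets, and it is strictly better than staying out (utility 0).\<close>
definition entry_choice ::
  "(nat \<Rightarrow> real) \<Rightarrow> real \<Rightarrow> real \<Rightarrow> real \<Rightarrow> nat \<Rightarrow> graph \<Rightarrow> nat \<Rightarrow> bool" where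
  "entry_choice b c \<gamma> c0 n g T \<longleftrightarrow> accepts b c \<gamma> n g T \<and>
     entry_utility b c \<gamma> c0 n g T > 0 \<and>
     (\<forall>T'. accepts b c \<gamma> n g T' \<longrightarrow> entry_utility b c \<gamma> c0 n g T' \<le> entry_utility b c \<gamma> c0 n g T)"

inductive reach :: "(nat \<Rightarrow> real) \<Rightarrow> real \<Rightarrow> real \<Rightarrow> real \<Rightarrow> nat \<Rightarrow> graph \<Rightarrow> bool"
  for b c \<gamma> c0 where
  start: "reach b c \<gamma> c0 1 {}"
| enter: "reach b c \<gamma> c0 n g \<Longrightarrow> pairwise_stable b c \<gamma> n g \<Longrightarrow> entry_choice b c \<gamma> c0 n g T
          \<Longrightarrow> reach b c \<gamma> c0 (Suc n) (g \<union> link n T)"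
| move: "reach b c \<gamma> c0 n g \<Longrightarrow> \<not> pairwise_stable b c \<gamma> n g \<Longrightarrow> br_move b c \<gamma> n g g'
          \<Longrightarrow> reach b c \<gamma> c0 n g'"

definition path_graph :: "nat \<Rightarrow> graph \<Rightarrow> bool" where
  "path_graph n g \<longleftrightarrow> (\<exists>f. bij_betw f {..<n} {..<n} \<and>
     g = (\<Union>i\<in>{i. Suc i < n}. link (f i) (f (Suc i))))"

definition two_star :: "nat \<Rightarrow> graph \<Rightarrow> bool" where
  "two_star n g \<longleftrightarrow> 4 \<le> n \<and> (\<exists>a b La Lb. a < n \<and> b < n \<and> a \<noteq> b \<and>
     La \<inter> Lb = {} \<and> La \<union> Lb = {..<n} - {a, b} \<and> La \<noteq> {} \<and> Lb \<noteq> {} \<and>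
     card La \<le> card Lb + 1 \<and> card Lb \<le> card La + 1 \<and>
     g = link a b \<union> (\<Union>x\<in>La. link a x) \<union> (\<Union>x\<in>Lb. link b x))"

end

theory Submission
  imports Defs
begin

definition cert :: "graph \<Rightarrow> nat \<Rightarrow> nat \<Rightarrow> (nat \<Rightarrow> nat) \<Rightarrow> (nat \<Rightarrow> nat) \<Rightarrow> bool" where
  "cert g r N \<delta> p \<longleftrightarrow> r < N \<and> \<delta> r = 0 \<and> (\<forall>(u,v)\<in>g. \<delta> v \<le> Suc (\<delta> u)) \<and>
     (\<forall>w<N. w \<noteq> r \<longrightarrow> p w < N \<and> (p w, w) \<in> g \<and> Suc (\<delta> (p w)) = \<delta> w)"

lemma cert_lower_aux:
  assumes "cert g r N \<delta> p" "is_vpath g xs r w"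
  shows "\<forall>k<length xs. \<delta> (xs ! k) \<le> k"
proof (intro allI impI)
  fix k assume "k < length xs"
  then show "\<delta> (xs ! k) \<le> k"
  proof (induction k)
    case 0
    then show ?case using assms unfolding is_vpath_def cert_def by (simp add: hd_conv_nth[symmetric])
  next
    case (Suc k)
    then have "(xs ! k, xs ! Suc k) \<in> g" using assms(2) unfolding is_vpath_def by blast
    then have "\<delta> (xs ! Suc k) \<le> Suc (\<delta> (xs ! k))" using assms(1) unfolding cert_def by blast
    then show ?case using Suc by simp
  qed
qed

lemma cert_lower:
  assumes "cert g r N \<delta> p" "is_vpath g xs r w"
  shows "\<delta> w \<le> length xs - 1"
proof -
  have ne: "xs \<noteq> []" and l: "last xs = w" using assms(2) unfolding is_vpath_def by auto
  have "w = xs ! (length xs - 1)" using ne l by (simp add: last_conv_nth)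
  then show ?thesis using cert_lower_aux[OF assms] ne by simp
qed

lemma cert_upper:
  assumes "cert g r N \<delta> p"
  shows "w < N \<Longrightarrow> \<exists>xs. is_vpath g xs r w \<and> length xs = Suc (\<delta> w)"
proof (induction "\<delta> w" arbitrary: w rule: less_induct)
  case less
  show ?case
  proof (cases "w = r")
    case True
    then have "is_vpath g [r] r w" unfolding is_vpath_def by simp
    then show ?thesis using True assms unfolding cert_def by auto
  next
    case False
    define u where "u = p w"
    have u: "u < N" "(u, w) \<in> g" "Suc (\<delta> u) = \<delta> w" using assms less(2) False unfolding cert_def u_def by auto
    then obtain xs where xs: "is_vpath g xs r u" "length xs = Suc (\<delta> u)" using less by force
    have lw: "\<forall>k<length xs. \<delta> (xs ! k) \<le> k" using cert_lower_aux[OF assms xs(1)] .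
    have nw: "w \<notin> set xs"
    proof
      assume "w \<in> set xs"
      then obtain k where "k < length xs" "xs ! k = w" by (auto simp: in_set_conv_nth)
      then show False using lw xs(2) u(3) by force
    qed
    have ne: "xs \<noteq> []" using xs(2) by auto
    have lastu: "last xs = u" using xs(1) unfolding is_vpath_def by simp
    have "is_vpath g (xs @ [w]) r w"
      unfolding is_vpath_def
    proof (intro conjI allI impI)
      show "hd (xs @ [w]) = r" using xs(1) ne unfolding is_vpath_def by simp
      show "distinct (xs @ [w])" using xs(1) nw unfolding is_vpath_def by simp
      fix k assume k: "Suc k < length (xs @ [w])"
      show "((xs @ [w]) ! k, (xs @ [w]) ! Suc k) \<in> g"
      proof (cases "Suc k < length xs")
        case True
        then show ?thesis using xs(1) unfolding is_vpath_def by (simp add: nth_append)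
      next
        case False
        then have "k = length xs - 1" using k by simp
        then have "(xs @ [w]) ! k = u" "(xs @ [w]) ! Suc k = w"
          using ne lastu by (auto simp: nth_append last_conv_nth)
        then show ?thesis using u(2) by simp
      qed
    qed auto
    then show ?thesis using xs(2) u(3) by (intro exI[of _ "xs @ [w]"]) simp
  qed
qed

lemma cert_dist:
  assumes "cert g r N \<delta> p" "w < N"
  shows "joined g r w \<and> gdist g r w = \<delta> w"
proof -
  obtain xs where xs: "is_vpath g xs r w" "length xs = Suc (\<delta> w)" using cert_upper[OF assms] by blast
  have "gdist g r w = \<delta> w"
    unfolding gdist_def
  proof (rule Least_equality)
    show "\<exists>xs. is_vpath g xs r w \<and> length xs = Suc (\<delta> w)" using xs by blast
    fix k assume "\<exists>xs. is_vpath g xs r w \<and> length xs = Suc k"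
    then obtain ys where "is_vpath g ys r w" "length ys = Suc k" by blast
    then show "\<delta> w \<le> k" using cert_lower[OF assms(1)] by fastforce
  qed
  then show ?thesis using xs unfolding joined_def by blast
qed

definition F :: "(nat \<Rightarrow> real) \<Rightarrow> nat \<Rightarrow> real" where
  "F b k = (if 1 < k then b k else 0)"

lemma util_cert:
  assumes "cert g r N \<delta> p"
  shows "utility b c 0 N g r = real (degree N g r) * (b 1 - c) + (\<Sum>w<N. F b (\<delta> w))"
proof -
  have "{w \<in> {..<N}. joined g r w \<and> gdist g r w > 1} = {w \<in> {..<N}. 1 < \<delta> w}"
    using cert_dist[OF assms] by auto
  moreover have "(\<Sum>w\<in>{w \<in> {..<N}. 1 < \<delta> w}. b (gdist g r w)) = (\<Sum>w\<in>{w \<in> {..<N}. 1 < \<delta> w}. b (\<delta> w))"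
    using cert_dist[OF assms] by (intro sum.cong) auto
  moreover have "(\<Sum>w\<in>{w \<in> {..<N}. 1 < \<delta> w}. b (\<delta> w)) = (\<Sum>w<N. F b (\<delta> w))"
    unfolding F_def by (rule sum.inter_filter) simp
  ultimately show ?thesis unfolding utility_def by simp
qed

lemma util0: "utility b c 0 N g j = real (degree N g j) * (b 1 - c) +
   (\<Sum>w\<in>{w \<in> {..<N}. joined g j w \<and> 1 < gdist g j w}. b (gdist g j w))"
  by (simp add: utility_def)

lemma mem_link: "(u, v) \<in> link i j \<longleftrightarrow> (u = i \<and> v = j) \<or> (u = j \<and> v = i)"
  by (auto simp: link_def)

lemma link_sym: "link i j = link j i" by (auto simp: link_def)

lemma closed_not_joined:
  assumes cl: "\<forall>(u,v)\<in>h. u \<in> S \<longrightarrow> v \<in> S" and "y \<in> S" "z \<notin> S"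
  shows "\<not> joined h y z"
proof
  assume "joined h y z"
  then obtain xs where xs: "is_vpath h xs y z" unfolding joined_def by blast
  have all: "\<forall>k<length xs. xs ! k \<in> S"
  proof (intro allI impI)
    fix k assume "k < length xs"
    then show "xs ! k \<in> S"
    proof (induction k)
      case 0 then show ?case using xs assms(2) unfolding is_vpath_def by (simp add: hd_conv_nth[symmetric])
    next
      case (Suc k)
      then have "(xs ! k, xs ! Suc k) \<in> h" using xs unfolding is_vpath_def by blast
      then show ?case using Suc cl by auto
    qed
  qed
  have ne: "xs \<noteq> []" and "last xs = z" using xs unfolding is_vpath_def by auto
  then have "z = xs ! (length xs - 1)" by (simp add: last_conv_nth)
  then show False using all ne assms(3) by simp
qed

lemma b_anti:
  assumes b_dec: "\<And>i. 1 \<le> i \<Longrightarrow> b (Suc i) < (b i :: real)"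
  shows "1 \<le> i \<Longrightarrow> i \<le> j \<Longrightarrow> b j \<le> b i"
proof (induction j)
  case 0 then show ?case by simp
next
  case (Suc j)
  show ?case
  proof (cases "i = Suc j")
    case True then show ?thesis by simp
  next
    case False
    then have "i \<le> j" using Suc by simp
    then show ?thesis using Suc b_dec[of j] by force
  qed
qed

lemma vpath_mono: "h \<subseteq> g \<Longrightarrow> is_vpath h xs y z \<Longrightarrow> is_vpath g xs y z"
  unfolding is_vpath_def by blast

lemma gdist_path: "joined g y z \<Longrightarrow> \<exists>xs. is_vpath g xs y z \<and> length xs = Suc (gdist g y z)"
  unfolding joined_def gdist_def
  by (rule LeastI_ex) (metis Suc_pred is_vpath_def length_greater_0_conv)

lemma gdist_le: "is_vpath g xs y z \<Longrightarrow> length xs = Suc k \<Longrightarrow> gdist g y z \<le> k"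
  unfolding gdist_def by (rule Least_le) blast

lemma del_util:
  assumes b_pos: "\<And>i. 1 \<le> i \<Longrightarrow> 0 < b i"
    and b_dec: "\<And>i. 1 \<le> i \<Longrightarrow> b (Suc i) < b i"
    and cb: "c < b 1"
    and ij: "(i, j) \<in> g" "j < N" "i \<noteq> j"
    and nj: "\<not> joined (g - link i j) i j"
  shows "utility b c 0 N (g - link i j) i < utility b c 0 N g i"
proof -
  define h where "h = g - link i j"
  have hg: "h \<subseteq> g" unfolding h_def by auto
  define Ah where "Ah = {w \<in> {..<N}. joined h i w \<and> 1 < gdist h i w}"
  define Ag where "Ag = {w \<in> {..<N}. joined g i w \<and> 1 < gdist g i w}"
  have key: "w \<in> Ag \<and> b (gdist h i w) \<le> b (gdist g i w)" if w: "w \<in> Ah" for w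
  proof -
    from w have jh: "joined h i w" and gh: "1 < gdist h i w" and wN: "w < N" unfolding Ah_def by auto
    obtain xs where xs: "is_vpath h xs i w" "length xs = Suc (gdist h i w)" using gdist_path[OF jh] by blast
    have jg: "joined g i w" using vpath_mono[OF hg xs(1)] unfolding joined_def by blast
    have dle: "gdist g i w \<le> gdist h i w" using gdist_le[OF vpath_mono[OF hg xs(1)] xs(2)] .
    have "1 < gdist g i w"
    proof (rule ccontr)
      assume "\<not> 1 < gdist g i w"
      obtain ys where ys: "is_vpath g ys i w" "length ys = Suc (gdist g i w)" using gdist_path[OF jg] by blast
      show False
      proof (cases "gdist g i w = 0")
        case True
        then obtain y where "ys = [y]" using ys(2) by (cases ys) auto
        then have "w = i" using ys(1) unfolding is_vpath_def by simp
        then have "is_vpath h [i] i w" unfolding is_vpath_def by simp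
        then show False using gdist_le[of h "[i]" i w 0] gh by simp
      next
        case False
        then have "gdist g i w = 1" using \<open>\<not> 1 < gdist g i w\<close> by simp
        then obtain y1 y2 where ys2: "ys = [y1, y2]" using ys(2)
          by (cases ys; cases "tl ys") auto
        then have "y1 = i" "y2 = w" "i \<noteq> w" "(i, w) \<in> g" using ys(1) unfolding is_vpath_def
          by (auto dest: spec[of _ 0])
        show False
        proof (cases "w = j")
          case True then show False using jh nj unfolding h_def by simp
        next
          case False
          then have "(i, w) \<in> h" using \<open>(i, w) \<in> g\<close> \<open>i \<noteq> w\<close> unfolding h_def by (auto simp: mem_link)
          then have "is_vpath h [i, w] i w" using \<open>i \<noteq> w\<close> unfolding is_vpath_def
            by (auto simp: less_Suc_eq)
          then show False using gdist_le[of h "[i, w]" i w 1] gh by simp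
        qed
      qed
    qed
    then show ?thesis using jg wN b_anti[of b, OF b_dec] dle unfolding Ag_def by simp
  qed
  have sub: "Ah \<subseteq> Ag" using key by blast
  have le: "\<And>w. w \<in> Ah \<Longrightarrow> b (gdist h i w) \<le> b (gdist g i w)" using key by blast
  have fin: "finite Ag" unfolding Ag_def by simp
  have s1: "(\<Sum>w\<in>Ah. b (gdist h i w)) \<le> (\<Sum>w\<in>Ah. b (gdist g i w))" using le by (rule sum_mono)
  have s2: "(\<Sum>w\<in>Ah. b (gdist g i w)) \<le> (\<Sum>w\<in>Ag. b (gdist g i w))"
    using fin sub by (intro sum_mono2) (auto simp: Ag_def intro!: less_imp_le[OF b_pos])
  have dsub: "{w \<in> {..<N}. (i, w) \<in> h} \<subset> {w \<in> {..<N}. (i, w) \<in> g}"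
    using ij unfolding h_def by (auto simp: mem_link)
  have "degree N h i < degree N g i" unfolding degree_def using psubset_card_mono[OF _ dsub] by simp
  then have "real (degree N h i) * (b 1 - c) < real (degree N g i) * (b 1 - c)"
    using cb by (intro mult_strict_right_mono) auto
  then show ?thesis using s1 s2 unfolding util0 h_def[symmetric] Ah_def[symmetric] Ag_def[symmetric] by linarith
qed

lemma add_util:
  assumes c1: "cert g i N \<delta> p" and c2: "cert (g \<union> link i z) i N (\<delta>(z := 1)) p'"
    and z: "z < N" "z \<noteq> i" "(i, z) \<notin> g"
  shows "utility b c 0 N (g \<union> link i z) i = utility b c 0 N g i + (b 1 - c) - F b (\<delta> z)"
proof -
  have "{w \<in> {..<N}. (i, w) \<in> g \<union> link i z} = insert z {w \<in> {..<N}. (i, w) \<in> g}"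
    using z by (auto simp: mem_link)
  then have dg: "degree N (g \<union> link i z) i = Suc (degree N g i)"
    unfolding degree_def using z by simp
  have zin: "z \<in> {..<N}" using z by simp
  have "(\<Sum>w<N. F b ((\<delta>(z := 1)) w)) = F b 1 + (\<Sum>w\<in>{..<N} - {z}. F b ((\<delta>(z := 1)) w))"
    using sum.remove[OF _ zin, of "\<lambda>w. F b ((\<delta>(z := 1)) w)"] by simp
  also have "(\<Sum>w\<in>{..<N} - {z}. F b ((\<delta>(z := 1)) w)) = (\<Sum>w\<in>{..<N} - {z}. F b (\<delta> w))"
    by (intro sum.cong) auto
  also have "(\<Sum>w\<in>{..<N} - {z}. F b (\<delta> w)) = (\<Sum>w<N. F b (\<delta> w)) - F b (\<delta> z)"
    using sum.remove[OF _ zin, of "\<lambda>w. F b (\<delta> w)"] by simp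
  finally have "(\<Sum>w<N. F b ((\<delta>(z := 1)) w)) = (\<Sum>w<N. F b (\<delta> w)) - F b (\<delta> z)"
    by (simp add: F_def)
  then show ?thesis using util_cert[OF c1, where b=b and c=c] util_cert[OF c2, where b=b and c=c] dg by (simp add: algebra_simps)
qed

definition onnodes :: "nat \<Rightarrow> graph \<Rightarrow> bool" where
  "onnodes n g \<longleftrightarrow> (\<forall>(u,v)\<in>g. u < n \<and> v < n)"

lemma cert_new_root:
  assumes c: "cert D T n \<delta> p" and on: "onnodes n D"
  shows "cert (D \<union> link n T) n (Suc n) (\<lambda>w. if w = n then 0 else Suc (\<delta> w)) (\<lambda>w. if w = T then n else p w)"
proof -
  have Tn: "T < n" and d0: "\<delta> T = 0" and e: "\<forall>(u,v)\<in>D. \<delta> v \<le> Suc (\<delta> u)"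
    and de: "\<forall>w<n. w \<noteq> T \<longrightarrow> p w < n \<and> (p w, w) \<in> D \<and> Suc (\<delta> (p w)) = \<delta> w"
    using c unfolding cert_def by auto
  have on': "\<And>u v. (u, v) \<in> D \<Longrightarrow> u < n \<and> v < n" using on unfolding onnodes_def by auto
  show ?thesis unfolding cert_def
  proof (intro conjI allI impI ballI)
    fix x assume x: "x \<in> D \<union> link n T"
    obtain u v where uv: "x = (u, v)" by (cases x)
    show "case x of (u, v) \<Rightarrow> (if v = n then 0 else Suc (\<delta> v)) \<le> Suc (if u = n then 0 else Suc (\<delta> u))"
    proof (cases "(u, v) \<in> D")
      case True then show ?thesis using uv e on'[OF True] by auto
    next
      case False then show ?thesis using uv x Tn d0 by (auto simp: mem_link)
    qed
  next
    fix w assume w: "w < Suc n" "w \<noteq> n"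
    show "(if w = T then n else p w) < Suc n" using w de by (auto simp: less_Suc_eq)
    show "(if w = T then n else p w, w) \<in> D \<union> link n T" using w de by (auto simp: mem_link)
    show "Suc (if (if w = T then n else p w) = n then 0 else Suc (\<delta> (if w = T then n else p w))) =
      (if w = n then 0 else Suc (\<delta> w))"
    proof (cases "w = T")
      case True then show ?thesis using d0 Tn by simp
    next
      case False then have "p w < n" "Suc (\<delta> (p w)) = \<delta> w" using w de by auto
      then show ?thesis using False w by simp
    qed
  qed (use Tn in auto)
qed

lemma cert_old_root:
  assumes c: "cert D T n \<delta> p" and on: "onnodes n D"
  shows "cert (D \<union> link n T) T (Suc n) (\<delta>(n := 1)) (p(n := T))"
proof -
  have Tn: "T < n" and d0: "\<delta> T = 0" and e: "\<forall>(u,v)\<in>D. \<delta> v \<le> Suc (\<delta> u)"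
    and de: "\<forall>w<n. w \<noteq> T \<longrightarrow> p w < n \<and> (p w, w) \<in> D \<and> Suc (\<delta> (p w)) = \<delta> w"
    using c unfolding cert_def by auto
  have on': "\<And>u v. (u, v) \<in> D \<Longrightarrow> u < n \<and> v < n" using on unfolding onnodes_def by auto
  show ?thesis unfolding cert_def
  proof (intro conjI allI impI ballI)
    fix x assume x: "x \<in> D \<union> link n T"
    obtain u v where uv: "x = (u, v)" by (cases x)
    show "case x of (u, v) \<Rightarrow> (\<delta>(n := 1)) v \<le> Suc ((\<delta>(n := 1)) u)"
    proof (cases "(u, v) \<in> D")
      case True then show ?thesis using uv e on'[OF True] by auto
    next
      case False then show ?thesis using uv x Tn d0 by (auto simp: mem_link)
    qed
  next
    fix w assume w: "w < Suc n" "w \<noteq> T"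
    show "(p(n := T)) w < Suc n" using w de Tn by (auto simp: less_Suc_eq)
    show "((p(n := T)) w, w) \<in> D \<union> link n T" using w de by (auto simp: mem_link)
    show "Suc ((\<delta>(n := 1)) ((p(n := T)) w)) = (\<delta>(n := 1)) w"
    proof (cases "w = n")
      case True then show ?thesis using d0 Tn by simp
    next
      case False then have "p w < n" "Suc (\<delta> (p w)) = \<delta> w" using w de by auto
      then show ?thesis using False w by simp
    qed
  qed (use Tn d0 in auto)
qed

lemma acc_util:
  assumes c: "cert D T n \<delta> p" and on: "onnodes n D"
  shows "utility b c 0 (Suc n) (D \<union> link n T) T = utility b c 0 n D T + (b 1 - c)"
proof -
  have Tn: "T < n" using c unfolding cert_def by simp
  have "{w \<in> {..<Suc n}. (T, w) \<in> D \<union> link n T} = insert n {w \<in> {..<n}. (T, w) \<in> D}"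
    using Tn on unfolding onnodes_def by (auto simp: mem_link)
  then have dg: "degree (Suc n) (D \<union> link n T) T = Suc (degree n D T)"
    unfolding degree_def by simp
  have "(\<Sum>w<Suc n. F b ((\<delta>(n := 1)) w)) = (\<Sum>w<n. F b (\<delta> w))"
    by (auto simp: F_def intro!: sum.cong)
  then show ?thesis using util_cert[OF c, where b=b and c=c] util_cert[OF cert_old_root[OF c on], where b=b and c=c] dg
    by (simp add: algebra_simps)
qed

lemma ent_util:
  assumes c: "cert D T n \<delta> p" and on: "onnodes n D"
  shows "entry_utility b c 0 c0 n D T = - c0 * real (degree n D T) + (b 1 - c) + (\<Sum>w<n. F b (Suc (\<delta> w)))"
proof -
  have Tn: "T < n" using c unfolding cert_def by simp
  have "{w \<in> {..<Suc n}. (n, w) \<in> D \<union> link n T} = {T}"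
    using Tn on unfolding onnodes_def by (auto simp: mem_link)
  then have dg: "degree (Suc n) (D \<union> link n T) n = 1"
    unfolding degree_def by simp
  have "(\<Sum>w<Suc n. F b (if w = n then 0 else Suc (\<delta> w))) = (\<Sum>w<n. F b (Suc (\<delta> w)))"
    by (auto simp: F_def intro!: sum.cong)
  then show ?thesis using util_cert[OF cert_new_root[OF c on], where b=b and c=c] dg unfolding entry_utility_def
    by (simp add: algebra_simps)
qed

definition dstar :: "nat \<Rightarrow> nat \<Rightarrow> nat set \<Rightarrow> nat set \<Rightarrow> graph" where
  "dstar a b La Lb = link a b \<union> (\<Union>x\<in>La. link a x) \<union> (\<Union>x\<in>Lb. link b x)"

definition dsw :: "nat \<Rightarrow> nat \<Rightarrow> nat \<Rightarrow> nat set \<Rightarrow> nat set \<Rightarrow> bool" where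
  "dsw n a b La Lb \<longleftrightarrow> a < n \<and> b < n \<and> a \<noteq> b \<and> La \<inter> Lb = {} \<and> La \<union> Lb = {..<n} - {a, b}"

lemma mem_dstar: "(u, v) \<in> dstar a b La Lb \<longleftrightarrow>
  (u = a \<and> v = b) \<or> (u = b \<and> v = a) \<or> (u = a \<and> v \<in> La) \<or> (v = a \<and> u \<in> La) \<or>
  (u = b \<and> v \<in> Lb) \<or> (v = b \<and> u \<in> Lb)"
  by (auto simp: dstar_def link_def)

lemma dstar_sym: "dstar a b La Lb = dstar b a Lb La"
  by (auto simp: dstar_def link_def)

lemma dsw_sym: "dsw n a b La Lb \<Longrightarrow> dsw n b a Lb La"
  by (auto simp: dsw_def)

lemma dsw_facts:
  assumes "dsw n a b La Lb"
  shows "a < n" "b < n" "a \<noteq> b" "a \<notin> La" "b \<notin> La" "a \<notin> Lb" "b \<notin> Lb"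
    "\<And>x. x \<in> La \<Longrightarrow> x \<notin> Lb" "\<And>x. x \<in> La \<Longrightarrow> x < n" "\<And>x. x \<in> Lb \<Longrightarrow> x < n"
    "\<And>w. w < n \<Longrightarrow> w = a \<or> w = b \<or> w \<in> La \<or> w \<in> Lb"
    "finite La" "finite Lb"
proof -
  have e: "La \<union> Lb = {..<n} - {a, b}" and d: "La \<inter> Lb = {}" using assms unfolding dsw_def by auto
  show "a < n" "b < n" "a \<noteq> b" using assms unfolding dsw_def by auto
  show "a \<notin> La" "b \<notin> La" "a \<notin> Lb" "b \<notin> Lb" using e by auto
  show "\<And>x. x \<in> La \<Longrightarrow> x \<notin> Lb" using d by auto
  show "\<And>x. x \<in> La \<Longrightarrow> x < n" "\<And>x. x \<in> Lb \<Longrightarrow> x < n" using e by auto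
  show "\<And>w. w < n \<Longrightarrow> w = a \<or> w = b \<or> w \<in> La \<or> w \<in> Lb" using e by auto
  have "La \<subseteq> {..<n}" "Lb \<subseteq> {..<n}" using e by auto
  then show "finite La" "finite Lb" by (auto intro: finite_subset)
qed

lemma dstar_on: "dsw n a b La Lb \<Longrightarrow> onnodes n (dstar a b La Lb)"
  using dsw_facts[of n a b La Lb] unfolding onnodes_def by (auto simp: mem_dstar)

definition dA :: "nat \<Rightarrow> nat \<Rightarrow> nat set \<Rightarrow> nat \<Rightarrow> nat" where
  "dA a b La w = (if w = a then 0 else if w = b \<or> w \<in> La then 1 else 2)"
definition pA :: "nat \<Rightarrow> nat \<Rightarrow> nat set \<Rightarrow> nat \<Rightarrow> nat" where
  "pA a b Lb w = (if w \<in> Lb then b else a)"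
definition dX :: "nat \<Rightarrow> nat \<Rightarrow> nat set \<Rightarrow> nat \<Rightarrow> nat" where
  "dX x a Lb w = (if w = x then 0 else if w = a then 1 else if w \<in> Lb then 3 else 2)"
definition pX :: "nat \<Rightarrow> nat \<Rightarrow> nat \<Rightarrow> nat set \<Rightarrow> nat \<Rightarrow> nat" where
  "pX x a b Lb w = (if w = a then x else if w \<in> Lb then b else a)"

lemma cert_A:
  assumes "dsw n a b La Lb"
  shows "cert (dstar a b La Lb) a n (dA a b La) (pA a b Lb)"
  using dsw_facts[OF assms] unfolding cert_def dA_def pA_def
  by (auto simp: mem_dstar)

lemma cert_X:
  assumes "dsw n a b La Lb" "x \<in> La"
  shows "cert (dstar a b La Lb) x n (dX x a Lb) (pX x a b Lb)"
  using dsw_facts[OF assms(1)] assms(2) unfolding cert_def dX_def pX_def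
  by (auto simp: mem_dstar)

lemma cert_C1:
  assumes "dsw n a b La Lb" "x \<in> La" "x' \<in> La" "x \<noteq> x'"
  shows "cert (dstar a b La Lb \<union> link x x') x n ((dX x a Lb)(x' := 1)) ((pX x a b Lb)(x' := x))"
  using dsw_facts[OF assms(1)] assms(2-) unfolding cert_def dX_def pX_def
  by (auto simp: mem_dstar mem_link)

lemma cert_C2:
  assumes "dsw n a b La Lb" "x \<in> La" "y \<in> Lb"
  shows "cert (dstar a b La Lb \<union> link x y) x n ((dX x a Lb)(y := 1)) ((pX x a b Lb)(y := x))"
  using dsw_facts[OF assms(1)] assms(2-) unfolding cert_def dX_def pX_def
  by (auto simp: mem_dstar mem_link)

lemma cert_C3:
  assumes "dsw n a b La Lb" "y \<in> Lb"
  shows "cert (dstar a b La Lb \<union> link a y) a n ((dA a b La)(y := 1)) ((pA a b Lb)(y := a))"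
  using dsw_facts[OF assms(1)] assms(2-) unfolding cert_def dA_def pA_def
  by (auto simp: mem_dstar mem_link)

locale prm =
  fixes b :: "nat \<Rightarrow> real" and c c0 :: real
  assumes b_pos: "\<And>i. 1 \<le> i \<Longrightarrow> 0 < b i"
    and b_dec: "\<And>i. 1 \<le> i \<Longrightarrow> b (Suc i) < b i"
    and c_lo: "b 1 - b 3 \<le> c" and c_hi: "c < b 1"
    and c0_lo: "b 2 - b 3 < c0" and c0_hi: "c0 < b 2 - b 4"
begin

lemma b32: "b 3 < b 2" using b_dec[of 2] by (simp add: numeral_3_eq_3 numeral_2_eq_2)
lemma b43: "b 4 < b 3" using b_dec[of 3] by (simp add: numeral_3_eq_3 eval_nat_numeral)
lemma k2: "b 1 - c < b 2" using c_lo b32 by linarith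
lemma k3: "b 1 - c \<le> b 3" using c_lo by linarith

abbreviation U where "U n g j \<equiv> utility b c 0 n g j"

lemma U1:
  assumes "dsw n a b' La Lb" "x \<in> La" "x' \<in> La" "x \<noteq> x'"
  shows "U n (dstar a b' La Lb \<union> link x x') x < U n (dstar a b' La Lb) x"
proof -
  note f = dsw_facts[OF assms(1)]
  have "U n (dstar a b' La Lb \<union> link x x') x = U n (dstar a b' La Lb) x + (b 1 - c) - F b (dX x a Lb x')"
    using assms f by (intro add_util[OF cert_X[OF assms(1,2)] cert_C1[OF assms]]) (auto simp: mem_dstar)
  moreover have "F b (dX x a Lb x') = b 2" using assms f by (auto simp: F_def dX_def)
  ultimately show ?thesis using k2 by linarith
qed

lemma U2:
  assumes "dsw n a b' La Lb" "x \<in> La" "y \<in> Lb"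
  shows "U n (dstar a b' La Lb \<union> link x y) x \<le> U n (dstar a b' La Lb) x"
proof -
  note f = dsw_facts[OF assms(1)]
  have "U n (dstar a b' La Lb \<union> link x y) x = U n (dstar a b' La Lb) x + (b 1 - c) - F b (dX x a Lb y)"
    using assms f by (intro add_util[OF cert_X[OF assms(1,2)] cert_C2[OF assms]]) (auto simp: mem_dstar)
  moreover have "F b (dX x a Lb y) = b 3" using assms f by (auto simp: F_def dX_def)
  ultimately show ?thesis using k3 by linarith
qed

lemma U3:
  assumes "dsw n a b' La Lb" "y \<in> Lb"
  shows "U n (dstar a b' La Lb \<union> link a y) a < U n (dstar a b' La Lb) a"
proof -
  note f = dsw_facts[OF assms(1)]
  have "U n (dstar a b' La Lb \<union> link a y) a = U n (dstar a b' La Lb) a + (b 1 - c) - F b (dA a b' La y)"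
    using assms f by (intro add_util[OF cert_A[OF assms(1)] cert_C3[OF assms]]) (auto simp: mem_dstar)
  moreover have "F b (dA a b' La y) = b 2" using assms f by (auto simp: F_def dA_def)
  ultimately show ?thesis using k2 by linarith
qed

lemma nj_half:
  assumes "dsw n a b' La Lb" "(i, j) \<in> dstar a b' La Lb" "i \<in> insert a La"
  shows "\<not> joined (dstar a b' La Lb - link i j) i j"
proof -
  note f = dsw_facts[OF assms(1)]
  show ?thesis
  proof (cases "i = a")
    case True
    then have "j = b' \<or> j \<in> La" using assms(2) f by (auto simp: mem_dstar)
    then show ?thesis
    proof
      assume j: "j = b'"
      show ?thesis using True j f
        by (intro closed_not_joined[where S = "insert a La"]) (auto simp: mem_dstar mem_link)
    next
      assume j: "j \<in> La"
      show ?thesis using True j f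
        by (intro closed_not_joined[where S = "- {j}"]) (auto simp: mem_dstar mem_link)
    qed
  next
    case False
    then have i: "i \<in> La" "j = a" using assms(2,3) f by (auto simp: mem_dstar)
    show ?thesis using i f
      by (intro closed_not_joined[where S = "{i}"]) (auto simp: mem_dstar mem_link)
  qed
qed

lemma nj:
  assumes "dsw n a b' La Lb" "(i, j) \<in> dstar a b' La Lb"
  shows "\<not> joined (dstar a b' La Lb - link i j) i j"
proof -
  have "i < n" using assms dstar_on[OF assms(1)] unfolding onnodes_def by auto
  then have "i \<in> insert a La \<or> i \<in> insert b' Lb" using dsw_facts(11)[OF assms(1)] by auto
  then show ?thesis
  proof
    assume "i \<in> insert a La" then show ?thesis using nj_half assms by blast
  next
    assume "i \<in> insert b' Lb"
    then show ?thesis using nj_half[OF dsw_sym[OF assms(1)]] assms(2) by (simp add: dstar_sym)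
  qed
qed

lemma stab_a:
  assumes "dsw n a b' La Lb"
  shows "\<forall>(i, j) \<in> dstar a b' La Lb.
        U n (dstar a b' La Lb - link i j) i \<le> U n (dstar a b' La Lb) i \<and>
        U n (dstar a b' La Lb - link i j) j \<le> U n (dstar a b' La Lb) j"
proof (intro ballI, clarify)
  fix i j assume ij: "(i, j) \<in> dstar a b' La Lb"
  have ji: "(j, i) \<in> dstar a b' La Lb" using ij by (auto simp: mem_dstar)
  have on: "i < n" "j < n" using ij dstar_on[OF assms] unfolding onnodes_def by auto
  have ne: "i \<noteq> j" using ij dsw_facts[OF assms] by (auto simp: mem_dstar)
  have "U n (dstar a b' La Lb - link i j) i < U n (dstar a b' La Lb) i"
    by (rule del_util[OF b_pos b_dec c_hi ij on(2) ne nj[OF assms ij]])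
  moreover have "U n (dstar a b' La Lb - link j i) j < U n (dstar a b' La Lb) j"
    by (rule del_util[OF b_pos b_dec c_hi ji on(1) ne[symmetric] nj[OF assms ji]])
  ultimately show "U n (dstar a b' La Lb - link i j) i \<le> U n (dstar a b' La Lb) i \<and>
        U n (dstar a b' La Lb - link i j) j \<le> U n (dstar a b' La Lb) j"
    by (simp add: link_sym)
qed

lemma stab_b_half:
  assumes "dsw n a b' La Lb" "i \<in> insert a La" "j < n" "i \<noteq> j" "(i, j) \<notin> dstar a b' La Lb"
    and inc: "U n (dstar a b' La Lb \<union> link i j) i > U n (dstar a b' La Lb) i"
  shows "U n (dstar a b' La Lb \<union> link i j) j < U n (dstar a b' La Lb) j"
proof -
  note f = dsw_facts[OF assms(1)]
  note s = dsw_sym[OF assms(1)]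
  show ?thesis
  proof (cases "i = a")
    case True
    then have "j \<in> Lb" using assms f by (auto simp: mem_dstar)
    then show ?thesis using U3[OF assms(1)] inc True by force
  next
    case False
    then have i: "i \<in> La" using assms by simp
    have "j = b' \<or> j \<in> La \<or> j \<in> Lb" using assms f i by (auto simp: mem_dstar)
    then show ?thesis
    proof (elim disjE)
      assume j: "j = b'"
      have "U n (dstar b' a Lb La \<union> link b' i) b' < U n (dstar b' a Lb La) b'"
        using U3[OF s i] .
      then show ?thesis using j by (simp add: dstar_sym link_sym)
    next
      assume j: "j \<in> La"
      then show ?thesis using U1[OF assms(1) i j assms(4)] inc by simp
    next
      assume j: "j \<in> Lb"
      then show ?thesis using U2[OF assms(1) i j] inc by simp
    qed
  qed
qed

lemma stable_dstar:
  assumes "dsw n a b' La Lb"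
  shows "pairwise_stable b c 0 n (dstar a b' La Lb)"
  unfolding pairwise_stable_def
proof (intro conjI stab_a[OF assms] allI impI)
  fix i j assume ij: "i < n" "j < n" "i \<noteq> j \<and> (i, j) \<notin> dstar a b' La Lb"
    and inc: "U n (dstar a b' La Lb \<union> link i j) i > U n (dstar a b' La Lb) i"
  have "i \<in> insert a La \<or> i \<in> insert b' Lb" using dsw_facts(11)[OF assms] ij by auto
  then show "U n (dstar a b' La Lb \<union> link i j) j < U n (dstar a b' La Lb) j"
  proof
    assume "i \<in> insert a La" then show ?thesis using stab_b_half[OF assms _ ij(2)] ij inc by blast
  next
    assume "i \<in> insert b' Lb"
    then show ?thesis using stab_b_half[OF dsw_sym[OF assms] _ ij(2)] ij inc by (simp add: dstar_sym)
  qed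
qed

end

lemma sum_part:
  assumes "dsw n a b' La Lb"
  shows "(\<Sum>w<n. f w) = f a + f b' + sum f La + sum f Lb"
proof -
  note fa = dsw_facts[OF assms]
  have "{..<n} = insert a (insert b' (La \<union> Lb))" using assms unfolding dsw_def by auto
  moreover have "a \<notin> insert b' (La \<union> Lb)" "b' \<notin> La \<union> Lb" using fa by auto
  moreover have "La \<inter> Lb = {}" using assms unfolding dsw_def by auto
  ultimately show ?thesis using fa(12,13) by (simp add: sum.union_disjoint add.assoc)
qed

lemma deg_A:
  assumes "dsw n a b' La Lb"
  shows "degree n (dstar a b' La Lb) a = Suc (card La)"
proof -
  note fa = dsw_facts[OF assms]
  have "{w \<in> {..<n}. (a, w) \<in> dstar a b' La Lb} = insert b' La" using fa by (auto simp: mem_dstar)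
  then show ?thesis unfolding degree_def using fa by simp
qed

lemma deg_X:
  assumes "dsw n a b' La Lb" "x \<in> La"
  shows "degree n (dstar a b' La Lb) x = 1"
proof -
  note fa = dsw_facts[OF assms(1)]
  have "{w \<in> {..<n}. (x, w) \<in> dstar a b' La Lb} = {a}" using fa assms(2) by (auto simp: mem_dstar)
  then show ?thesis unfolding degree_def by simp
qed

context prm begin

abbreviation EU where "EU n g T \<equiv> entry_utility b c 0 c0 n g T"

lemma EA:
  assumes "dsw n a b' La Lb"
  shows "EU n (dstar a b' La Lb) a = - c0 * (real (card La) + 1) + (b 1 - c) + b 2
     + real (card La) * b 2 + real (card Lb) * b 3"
proof -
  note fa = dsw_facts[OF assms]
  have s1: "sum (\<lambda>w. F b (Suc (dA a b' La w))) La = real (card La) * b 2"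
  proof -
    have "sum (\<lambda>w. F b (Suc (dA a b' La w))) La = sum (\<lambda>w. b 2) La"
      using fa by (intro sum.cong) (auto simp: F_def dA_def numeral_2_eq_2)
    then show ?thesis by simp
  qed
  have s2: "sum (\<lambda>w. F b (Suc (dA a b' La w))) Lb = real (card Lb) * b 3"
  proof -
    have "sum (\<lambda>w. F b (Suc (dA a b' La w))) Lb = sum (\<lambda>w. b 3) Lb"
      using fa by (intro sum.cong) (auto simp: F_def dA_def numeral_3_eq_3)
    then show ?thesis by simp
  qed
  have v: "F b (Suc (dA a b' La a)) = 0" "F b (Suc (dA a b' La b')) = b 2"
    using fa by (simp_all add: F_def dA_def numeral_2_eq_2)
  have "(\<Sum>w<n. F b (Suc (dA a b' La w))) = b 2 + real (card La) * b 2 + real (card Lb) * b 3"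
    using sum_part[OF assms, of "\<lambda>w. F b (Suc (dA a b' La w))"] s1 s2 v by simp
  then show ?thesis using ent_util[OF cert_A[OF assms] dstar_on[OF assms]] deg_A[OF assms]
    by (simp add: algebra_simps)
qed

lemma EX:
  assumes "dsw n a b' La Lb" "x \<in> La"
  shows "EU n (dstar a b' La Lb) x = - c0 + (b 1 - c) + b 2 + b 3
     + (real (card La) - 1) * b 3 + real (card Lb) * b 4"
proof -
  note fa = dsw_facts[OF assms(1)]
  have r: "sum f La = f x + sum f (La - {x})" for f :: "nat \<Rightarrow> real"
    using sum.remove[OF fa(12) assms(2)] by simp
  have c1: "real (card (La - {x})) = real (card La) - 1"
    proof -
    have "0 < card La" using assms(2) fa(12) card_gt_0_iff by blast
    then show ?thesis using card_Diff_singleton[OF assms(2)] by (simp add: of_nat_diff)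
  qed
  have s1: "sum (\<lambda>w. F b (Suc (dX x a Lb w))) La = (real (card La) - 1) * b 3"
  proof -
    have "sum (\<lambda>w. F b (Suc (dX x a Lb w))) (La - {x}) = sum (\<lambda>w. b 3) (La - {x})"
      using fa by (intro sum.cong) (auto simp: F_def dX_def numeral_3_eq_3)
    then show ?thesis using r[of "\<lambda>w. F b (Suc (dX x a Lb w))"] c1 by (simp add: F_def dX_def)
  qed
  have s2: "sum (\<lambda>w. F b (Suc (dX x a Lb w))) Lb = real (card Lb) * b 4"
  proof -
    have "sum (\<lambda>w. F b (Suc (dX x a Lb w))) Lb = sum (\<lambda>w. b 4) Lb"
      using fa assms(2) by (intro sum.cong) (auto simp: F_def dX_def eval_nat_numeral)
    then show ?thesis by simp
  qed
  have v: "F b (Suc (dX x a Lb a)) = b 2" "F b (Suc (dX x a Lb b')) = b 3"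
    using fa assms(2) by (auto simp: F_def dX_def numeral_2_eq_2 numeral_3_eq_3)
  have "(\<Sum>w<n. F b (Suc (dX x a Lb w))) = b 2 + b 3 + (real (card La) - 1) * b 3 + real (card Lb) * b 4"
    using sum_part[OF assms(1), of "\<lambda>w. F b (Suc (dX x a Lb w))"] s1 s2 v by simp
  then show ?thesis using ent_util[OF cert_X[OF assms] dstar_on[OF assms(1)]] deg_X[OF assms]
    by (simp add: algebra_simps)
qed

lemma accepts_all:
  assumes "dsw n a b' La Lb" "T < n"
  shows "accepts b c 0 n (dstar a b' La Lb) T"
proof -
  note fa = dsw_facts[OF assms(1)]
  have "\<exists>\<delta> p. cert (dstar a b' La Lb) T n \<delta> p"
  proof -
    have "T = a \<or> T = b' \<or> T \<in> La \<or> T \<in> Lb" using fa(11) assms(2) by blast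
    then show ?thesis
    proof (elim disjE)
      assume "T = a" then show ?thesis using cert_A[OF assms(1)] by blast
    next
      assume "T = b'" then show ?thesis using cert_A[OF dsw_sym[OF assms(1)]] by (auto simp: dstar_sym)
    next
      assume "T \<in> La" then show ?thesis using cert_X[OF assms(1)] by blast
    next
      assume "T \<in> Lb" then show ?thesis using cert_X[OF dsw_sym[OF assms(1)]] by (auto simp: dstar_sym)
    qed
  qed
  then obtain \<delta> p where cp: "cert (dstar a b' La Lb) T n \<delta> p" by blast
  show ?thesis unfolding accepts_def
    using acc_util[OF cp dstar_on[OF assms(1)], where b=b and c=c] assms(2) c_hi by simp
qed

end

definition Inv :: "nat \<Rightarrow> graph \<Rightarrow> bool" where
  "Inv n g \<longleftrightarrow> (n = 1 \<and> g = {}) \<or> (\<exists>a b' La Lb. dsw n a b' La Lb \<and> card La \<le> card Lb + 1 \<and>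
      card Lb \<le> card La + 1 \<and> g = dstar a b' La Lb)"

lemma dsw_card: "dsw n a b' La Lb \<Longrightarrow> n = card La + card Lb + 2"
  using sum_part[of n a b' La Lb "\<lambda>_. 1::nat"] by simp

lemma addA: "dstar a b' La Lb \<union> link n a = dstar a b' (insert n La) Lb"
  by (auto simp: dstar_def link_def)

lemma dsw_addA: "dsw n a b' La Lb \<Longrightarrow> dsw (Suc n) a b' (insert n La) Lb"
  unfolding dsw_def by auto

lemma n_notin: "dsw n a b' La Lb \<Longrightarrow> n \<notin> La" using dsw_facts(9) by blast

context prm begin

lemma entry_half:
  assumes d: "dsw n a b' La Lb" and bal: "card Lb \<le> card La" "card La \<le> card Lb + 1"
    and ec: "entry_choice b c 0 c0 n (dstar a b' La Lb) T"
  shows "Inv (Suc n) (dstar a b' La Lb \<union> link n T)"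
proof -
  note fa = dsw_facts[OF d]
  define la where "la = real (card La)"
  define lb where "lb = real (card Lb)"
  have Tn: "T < n" using ec unfolding entry_choice_def accepts_def by simp
  have ge: "EU n (dstar a b' La Lb) b' \<le> EU n (dstar a b' La Lb) T"
    using ec accepts_all[OF d fa(2)] unfolding entry_choice_def by blast
  have EB: "EU n (dstar a b' La Lb) b' = - c0 * (lb + 1) + (b 1 - c) + b 2 + lb * b 2 + la * b 3"
    using EA[OF dsw_sym[OF d]] unfolding la_def lb_def by (simp add: dstar_sym)
  have p1: "0 < b 2 - b 4 - c0" using c0_hi by simp
  have T4: "T = a \<or> T = b' \<or> T \<in> La \<or> T \<in> Lb" using fa(11) Tn by blast
  then show ?thesis
  proof (elim disjE)
    assume T: "T = a"
    have "card La \<noteq> card Lb + 1"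
    proof
      assume e: "card La = card Lb + 1"
      then have "la = lb + 1" unfolding la_def lb_def by simp
      moreover have "EU n (dstar a b' La Lb) a = - c0 * (la + 1) + (b 1 - c) + b 2 + la * b 2 + lb * b 3"
        using EA[OF d] unfolding la_def lb_def by simp
      ultimately have "EU n (dstar a b' La Lb) b' - EU n (dstar a b' La Lb) a = c0 - b 2 + b 3"
        using EB by (simp add: algebra_simps)
      then show False using ge T c0_lo by simp
    qed
    then have "card La = card Lb" using bal by simp
    then show ?thesis unfolding Inv_def T addA
      using dsw_addA[OF d] n_notin[OF d] fa(12) by (intro disjI2 exI[of _ a] exI[of _ b'] exI[of _ "insert n La"] exI[of _ Lb]) simp
  next
    assume T: "T = b'"
    have e: "dstar a b' La Lb \<union> link n b' = dstar a b' La (insert n Lb)"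
      by (auto simp: dstar_def link_def)
    have "dsw (Suc n) a b' La (insert n Lb)" using dsw_sym[OF dsw_addA[OF dsw_sym[OF d]]] .
    moreover have "n \<notin> Lb" using n_notin[OF dsw_sym[OF d]] .
    ultimately show ?thesis unfolding Inv_def T e using bal fa(13)
      by (intro disjI2 exI[of _ a] exI[of _ b'] exI[of _ La] exI[of _ "insert n Lb"]) simp
  next
    assume T: "T \<in> La"
    have "card Lb = 0"
    proof (rule ccontr)
      assume "card Lb \<noteq> 0"
      then have lbp: "0 < lb" unfolding lb_def by simp
      have "EU n (dstar a b' La Lb) b' - EU n (dstar a b' La Lb) T = lb * (b 2 - b 4 - c0)"
        using EB EX[OF d T] unfolding la_def lb_def by (simp add: algebra_simps)
      moreover have "0 < lb * (b 2 - b 4 - c0)" using lbp p1 by simp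
      ultimately show False using ge by simp
    qed
    then have Lb: "Lb = {}" using fa(13) by simp
    have La: "La = {T}" using bal \<open>card Lb = 0\<close> T fa(12) card_le_Suc0_iff_eq[of La] by auto
    have e: "dstar a b' La Lb \<union> link n T = dstar a T {b'} {n}"
      using La Lb by (auto simp: dstar_def link_def)
    have e1: "{..<n} - {a, b'} = {T}" using d La Lb unfolding dsw_def by simp
    have aT: "a \<noteq> T" "b' \<noteq> T" using T fa(4,5) by auto
    have "{b', n} = {..<Suc n} - {a, T}"
    proof (intro equalityI subsetI)
      fix w assume "w \<in> {b', n}"
      then show "w \<in> {..<Suc n} - {a, T}" using fa(1-3) aT Tn by auto
    next
      fix w assume w: "w \<in> {..<Suc n} - {a, T}"
      show "w \<in> {b', n}"
      proof (cases "w = n")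
        case False
        then have "w \<in> {..<n}" "w \<noteq> a" "w \<noteq> T" using w by auto
        then have "w \<notin> {..<n} - {a, b'}" using e1 by simp
        then show ?thesis using \<open>w \<in> {..<n}\<close> \<open>w \<noteq> a\<close> by simp
      qed simp
    qed
    then have "dsw (Suc n) a T {b'} {n}" using fa(1-3) aT Tn unfolding dsw_def by auto
    then show ?thesis unfolding Inv_def e
      by (intro disjI2 exI[of _ a] exI[of _ T] exI[of _ "{b'}"] exI[of _ "{n}"]) simp
  next
    assume T: "T \<in> Lb"
    then have "card Lb \<noteq> 0" using fa(13) by auto
    then have lbp: "0 < lb" unfolding lb_def by simp
    have lab: "lb \<le> la" using bal unfolding la_def lb_def by simp
    have "EU n (dstar a b' La Lb) T = - c0 + (b 1 - c) + b 2 + b 3 + (lb - 1) * b 3 + la * b 4"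
      using EX[OF dsw_sym[OF d] T] unfolding la_def lb_def by (simp add: dstar_sym)
    then have "EU n (dstar a b' La Lb) b' - EU n (dstar a b' La Lb) T
        = lb * (b 2 - b 4 - c0) + (la - lb) * (b 3 - b 4)"
      using EB by (simp add: algebra_simps)
    moreover have "0 < lb * (b 2 - b 4 - c0)" using lbp p1 by simp
    moreover have "0 \<le> (la - lb) * (b 3 - b 4)" using lab b43 by simp
    ultimately show ?thesis using ge by simp
  qed
qed

lemma entry_any:
  assumes d: "dsw n a b' La Lb" and bal: "card La \<le> card Lb + 1" "card Lb \<le> card La + 1"
    and ec: "entry_choice b c 0 c0 n (dstar a b' La Lb) T"
  shows "Inv (Suc n) (dstar a b' La Lb \<union> link n T)"
proof (cases "card Lb \<le> card La")
  case True show ?thesis by (rule entry_half[OF d True bal(1) ec])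
next
  case False
  then show ?thesis using entry_half[OF dsw_sym[OF d], of T] bal ec by (simp add: dstar_sym)
qed

lemma Inv_stable: "Inv n g \<Longrightarrow> pairwise_stable b c 0 n g"
  unfolding Inv_def
proof (elim disjE exE conjE)
  assume "n = 1" "g = {}"
  then show ?thesis unfolding pairwise_stable_def by simp
next
  fix a b' La Lb assume "dsw n a b' La Lb" "g = dstar a b' La Lb"
  then show ?thesis using stable_dstar by simp
qed

lemma reach_Inv: "reach b c 0 c0 n g \<Longrightarrow> Inv n g"
proof (induction rule: reach.induct)
  case start then show ?case unfolding Inv_def by simp
next
  case (enter n g T)
  show ?case using enter.IH unfolding Inv_def[of n g]
  proof (elim disjE exE conjE)
    assume n: "n = 1" and g: "g = {}"
    have "T < 1" using enter.hyps(3) n unfolding entry_choice_def accepts_def by simp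
    then have T: "T = 0" by simp
    have "g \<union> link n T = dstar 0 1 {} {}" using g n T by (auto simp: dstar_def link_def)
    moreover have "dsw (Suc n) 0 1 {} {}" using n unfolding dsw_def by auto
    ultimately show ?thesis unfolding Inv_def
      by (intro disjI2 exI[of _ 0] exI[of _ 1] exI[of _ "{}"] exI[of _ "{}"]) simp
  next
    fix a b' La Lb assume "dsw n a b' La Lb" "card La \<le> card Lb + 1" "card Lb \<le> card La + 1"
      "g = dstar a b' La Lb"
    then show ?thesis using entry_any enter.hyps(3) by blast
  qed
next
  case (move n g g')
  then show ?case using Inv_stable by blast
qed

end

lemma path2:
  assumes "a \<noteq> b'" "{a, b'} = {..<2::nat}"
  shows "path_graph 2 (link a b')"
proof -
  define f where "f = (\<lambda>i::nat. if i = 0 then a else b')"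
  have l2: "{..<2::nat} = {0, 1}" by auto
  have "inj_on f {..<2}" unfolding inj_on_def f_def l2 using assms(1) by auto
  moreover have "f ` {..<2} = {a, b'}" unfolding f_def l2 by auto
  ultimately have "bij_betw f {..<2} {..<2}" unfolding bij_betw_def using assms(2) by simp
  moreover have "{i. Suc i < 2} = {0::nat}" by auto
  ultimately show ?thesis unfolding path_graph_def by (intro exI[of _ f]) (simp add: f_def)
qed

lemma path3:
  assumes "a \<noteq> b'" "a \<noteq> x" "b' \<noteq> x" "{a, b', x} = {..<3::nat}"
  shows "path_graph 3 (link a b' \<union> link a x)"
proof -
  define f where "f = (\<lambda>i::nat. if i = 0 then x else if i = 1 then a else b')"
  have l3: "{..<3::nat} = {0, 1, 2}" by auto
  have "inj_on f {..<3}" unfolding inj_on_def f_def l3 using assms(1-3) by auto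
  moreover have "f ` {..<3} = {a, b', x}" unfolding f_def l3 by auto
  ultimately have "bij_betw f {..<3} {..<3}" unfolding bij_betw_def using assms(4) by simp
  moreover have "{i. Suc i < 3} = {0::nat, 1}" by auto
  moreover have "link a b' \<union> link a x = link x a \<union> link a b'" by (auto simp: link_def)
  ultimately show ?thesis unfolding path_graph_def by (intro exI[of _ f]) (simp add: f_def)
qed

lemma Inv_shape:
  assumes "Inv n g"
  shows "(n \<le> 3 \<longrightarrow> path_graph n g) \<and> (4 \<le> n \<longrightarrow> two_star n g)"
  using assms unfolding Inv_def
proof (elim disjE exE conjE)
  assume "n = 1" "g = {}"
  moreover have "path_graph 1 {}" unfolding path_graph_def
    by (intro exI[of _ id]) auto
  ultimately show ?thesis by simp
next
  fix a b' La Lb assume d: "dsw n a b' La Lb" and bal: "card La \<le> card Lb + 1" "card Lb \<le> card La + 1"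
    and g: "g = dstar a b' La Lb"
  note fa = dsw_facts[OF d]
  have nc: "n = card La + card Lb + 2" using dsw_card[OF d] .
  have e: "La \<union> Lb = {..<n} - {a, b'}" "La \<inter> Lb = {}" using d unfolding dsw_def by auto
  show ?thesis
  proof (intro conjI impI)
    assume n4: "4 \<le> n"
    then have "La \<noteq> {}" "Lb \<noteq> {}" using nc bal by auto
    then show "two_star n g" unfolding two_star_def g dstar_def using n4 fa(1-3) e bal
      by (intro conjI exI[of _ a] exI[of _ b'] exI[of _ La] exI[of _ Lb]) simp_all
  next
    assume n3: "n \<le> 3"
    have sym: "path_graph n (dstar a b' La Lb)"
      if d: "dsw n a b' La Lb" and nc: "n = card La + card Lb + 2" and n3: "n \<le> 3"
        and lb: "card Lb \<le> card La" for a b' La Lb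
    proof -
      note fa = dsw_facts[OF d]
      have e: "La \<union> Lb = {..<n} - {a, b'}" using d unfolding dsw_def by auto
      have "card Lb = 0" using nc n3 lb by simp
      then have Lb: "Lb = {}" using fa(13) by simp
      show ?thesis
      proof (cases "card La = 0")
        case True
        then have La: "La = {}" using fa(12) by simp
        have n2: "n = 2" using nc La Lb by simp
        have "dstar a b' La Lb = link a b'" using La Lb by (auto simp: dstar_def)
        moreover have "{a, b'} = {..<2}" using e La Lb fa(1-3) n2 by auto
        ultimately show ?thesis using path2 fa(3) n2 by simp
      next
        case False
        then have "card La = 1" using nc n3 Lb by simp
        then obtain x where La: "La = {x}" using card_1_singletonE by blast
        have n3': "n = 3" using nc La Lb by simp
        have "dstar a b' La Lb = link a b' \<union> link a x" using La Lb by (auto simp: dstar_def)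
        moreover have "{a, b', x} = {..<3}" using e La Lb fa(1-3) n3' by auto
        ultimately show ?thesis using path3 fa(3,4,5) La n3' by simp
      qed
    qed
    show "path_graph n g"
    proof (cases "card Lb \<le> card La")
      case True then show ?thesis using sym[OF d nc n3] g by simp
    next
      case False then show ?thesis using sym[OF dsw_sym[OF d] _ n3] nc g by (simp add: dstar_sym)
    qed
  qed
qed

theorem corollary1:
  fixes b :: "nat \<Rightarrow> real" and c c0 :: real and n :: nat and g :: graph
  assumes b_pos: "\<And>i. 1 \<le> i \<Longrightarrow> 0 < b i"
    and b_dec: "\<And>i. 1 \<le> i \<Longrightarrow> b (Suc i) < b i"
    and c_lo: "b 1 - b 3 \<le> c" and c_hi: "c < b 1"
    and c0_lo: "b 2 - b 3 < c0" and c0_hi: "c0 < b 2 - b 4"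
    and reached: "reach b c 0 c0 n g"
    and stable: "pairwise_stable b c 0 n g"
  shows "(n \<le> 3 \<longrightarrow> path_graph n g) \<and> (4 \<le> n \<longrightarrow> two_star n g)"
proof -
  have P: "prm b c c0" unfolding prm_def using b_pos b_dec c_lo c_hi c0_lo c0_hi by blast
  show ?thesis by (rule Inv_shape[OF prm.reach_Inv[OF P reached]])
qed

end
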